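(* Let $N\ge 1$ and $R\ge 1$, and for each $n=1,\ldots,N$ let $\mathbf{A}^{(n)}\in\mathbb{R}^{I_n\times R}$ be a random matrix with rows $\mathbf{a}^{(n)}_{i_n}\in\mathbb{R}^R$ (written as column vectors), $i_n=1,\ldots,I_n$, all entries having finite second moments. Assume the matrices $\mathbf{A}^{(1)},\ldots,\mathbf{A}^{(N)}$ are independent and that, for all $n$ and all $i_n$, the row vectors $\{\mathbf{a}^{(n)}_{i_n}\}$ are independent. Then $$\mathbb{E}\left[ \Big(\bigodot_n \mathbf{A}^{(n)}\Big)^T \Big(\bigodot_n \mathbf{A}^{(n)}\Big)\right] =\sum_{i_1=1}^{I_1}\cdots\sum_{i_N=1}^{I_N} \mathbb{E}\left[ \mathbf{a}^{(1)}_{i_1}\mathbf{a}^{(1)T}_{i_1}\right]\circledast \mathbb{E}\left[ \mathbf{a}^{(2)}_{i_2}\mathbf{a}^{(2)T}_{i_2}\right]\circledast\cdots\circledast \mathbb{E}\left[ \mathbf{a}^{(N)}_{i_N}\mathbf{a}^{(N)T}_{i_N}\right],$$ where $\mathbb{E}\left[ \mathbf{a}^{(n)}_{i_n}\mathbf{a}^{(n)T}_{i_n}\right] = \mathbb{E}[\mathbf{a}_{i_n}^{(n)}]\mathbb{E}[\mathbf{a}_{i_n}^{(n)}]^T + \mathrm{Var}\big(\mathbf{a}^{(n)}_{i_n}\big)$, with $\mathrm{Var}$ denoting the covariance matrix.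
   Context: $\circledast$ denotes the Hadamard (entrywise) product of matrices of the same size. For matrices $\mathbf{A}\in\mathbb{R}^{I\times K}$, $\mathbf{B}\in\mathbb{R}^{J\times K}$, the Khatri–Rao product $\mathbf{A}\odot\mathbf{B}\in\mathbb{R}^{IJ\times K}$ is the columnwise Kronecker product, and $\bigodot_n \mathbf{A}^{(n)} = \mathbf{A}^{(N)}\odot\mathbf{A}^{(N-1)}\odot\cdots\odot\mathbf{A}^{(1)}$, a matrix of size $\prod_n I_n\times R$ whose rows are exactly the vectors $\mathbf{a}^{(1)}_{i_1}\circledast\cdots\circledast\mathbf{a}^{(N)}_{i_N}$ (transposed) as $(i_1,\ldots,i_N)$ ranges over all index tuples. *)

theory Defs
  imports "HOL-Probability.Probability"
begin

text \<open>Conventions (0-based indices): a family of random matrices is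
  A :: nat => nat => nat => 'a => real, where A n i r w is entry (i,r) of the
  matrix A^(n) (n < N, i < I n, r < R) at outcome w.\<close>

definition index_tuples :: "nat \<Rightarrow> (nat \<Rightarrow> nat) \<Rightarrow> (nat \<Rightarrow> nat) set" where
  "index_tuples N I = PiE {..<N} (\<lambda>n. {..<I n})"

text \<open>Khatri-Rao product of A^(N),...,A^(1): the row indexed by the tuple t is the
  Hadamard product of the rows a^(n)_{t n}; entry in column r.\<close>
definition khatri_rao :: "nat \<Rightarrow> (nat \<Rightarrow> nat \<Rightarrow> nat \<Rightarrow> real) \<Rightarrow> (nat \<Rightarrow> nat) \<Rightarrow> nat \<Rightarrow> real" where
  "khatri_rao N A t r = (\<Prod>n<N. A n (t n) r)"

definition gram :: "'r set \<Rightarrow> ('r \<Rightarrow> nat \<Rightarrow> real) \<Rightarrow> nat \<Rightarrow> nat \<Rightarrow> real" where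
  "gram Rows K j k = (\<Sum>t\<in>Rows. K t j * K t k)"

definition covariance :: "'a measure \<Rightarrow> ('a \<Rightarrow> real) \<Rightarrow> ('a \<Rightarrow> real) \<Rightarrow> real" where
  "covariance M X Y =
     integral\<^sup>L M (\<lambda>w. (X w - integral\<^sup>L M X) * (Y w - integral\<^sup>L M Y))"

end

theory Submission
  imports Defs
begin

lemma sq_prod_integrable:
  fixes X Y :: "'a \<Rightarrow> real"
  assumes "X \<in> borel_measurable M" "Y \<in> borel_measurable M"
    "integrable M (\<lambda>w. (X w)\<^sup>2)" "integrable M (\<lambda>w. (Y w)\<^sup>2)"
  shows "integrable M (\<lambda>w. X w * Y w)"
proof (rule Bochner_Integration.integrable_bound)
  show "integrable M (\<lambda>w. (X w)\<^sup>2 + (Y w)\<^sup>2)" using assms by auto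
  show "(\<lambda>w. X w * Y w) \<in> borel_measurable M" using assms by auto
  show "AE w in M. norm (X w * Y w) \<le> norm ((X w)\<^sup>2 + (Y w)\<^sup>2)"
  proof (rule AE_I2)
    fix w
    have "0 \<le> (\<bar>X w\<bar> - \<bar>Y w\<bar>)\<^sup>2" by simp
    then have "2*\<bar>X w\<bar>*\<bar>Y w\<bar> \<le> (X w)\<^sup>2 + (Y w)\<^sup>2" by (simp add: power2_eq_square algebra_simps)
    moreover have "0 \<le> \<bar>X w\<bar>*\<bar>Y w\<bar>" by simp
    ultimately have "\<bar>X w * Y w\<bar> \<le> (X w)\<^sup>2 + (Y w)\<^sup>2"
      using abs_mult[of "X w" "Y w"] by linarith
    then show "norm (X w * Y w) \<le> norm ((X w)\<^sup>2 + (Y w)\<^sup>2)" by simp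
  qed
qed

lemma sq_integrable:
  fixes X :: "'a \<Rightarrow> real"
  assumes "prob_space M" "X \<in> borel_measurable M" "integrable M (\<lambda>w. (X w)\<^sup>2)"
  shows "integrable M X"
proof (rule Bochner_Integration.integrable_bound)
  interpret prob_space M by fact
  show "integrable M (\<lambda>w. (X w)\<^sup>2 + 1)" using assms by auto
  show "X \<in> borel_measurable M" by fact
  show "AE w in M. norm (X w) \<le> norm ((X w)\<^sup>2 + 1)"
  proof (rule AE_I2)
    fix w
    have "0 \<le> (\<bar>X w\<bar> - 1)\<^sup>2" by simp
    then have "2*\<bar>X w\<bar> \<le> (X w)\<^sup>2 + 1" by (simp add: power2_eq_square algebra_simps)
    then have "\<bar>X w\<bar> \<le> (X w)\<^sup>2 + 1" by simp
    then show "norm (X w) \<le> norm ((X w)\<^sup>2 + 1)" by simp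
  qed
qed

lemma cov:
  fixes X Y :: "'a \<Rightarrow> real"
  assumes "prob_space M" "integrable M X" "integrable M Y" "integrable M (\<lambda>w. X w * Y w)"
  shows "integral\<^sup>L M (\<lambda>w. X w * Y w) = integral\<^sup>L M X * integral\<^sup>L M Y + covariance M X Y"
proof -
  interpret P: prob_space M by fact
  define a where "a = integral\<^sup>L M X"
  define b where "b = integral\<^sup>L M Y"
  have eq: "(\<lambda>w. (X w - a) * (Y w - b)) = (\<lambda>w. (X w * Y w - b * X w) - a * Y w + a * b)"
    by (rule ext) (simp add: algebra_simps)
  have i1: "integrable M (\<lambda>w. X w * Y w - b * X w)" using assms by auto
  have i2: "integrable M (\<lambda>w. (X w * Y w - b * X w) - a * Y w)" using i1 assms by auto
  have "covariance M X Y = integral\<^sup>L M (\<lambda>w. (X w * Y w - b * X w) - a * Y w) + a * b"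
    unfolding covariance_def a_def[symmetric] b_def[symmetric] eq
    using i2 P.prob_space by (subst Bochner_Integration.integral_add) auto
  also have "integral\<^sup>L M (\<lambda>w. (X w * Y w - b * X w) - a * Y w) = integral\<^sup>L M (\<lambda>w. X w * Y w - b * X w) - a * b"
    using i1 assms by (subst Bochner_Integration.integral_diff) (auto simp: b_def)
  also have "integral\<^sup>L M (\<lambda>w. X w * Y w - b * X w) = integral\<^sup>L M (\<lambda>w. X w * Y w) - b * a"
    using assms by (subst Bochner_Integration.integral_diff) (auto simp: a_def)
  finally show ?thesis by (simp add: a_def b_def)
qed

theorem theorem1:
  fixes M :: "'a measure"
    and N R :: nat
    and I :: "nat \<Rightarrow> nat"
    and A :: "nat \<Rightarrow> nat \<Rightarrow> nat \<Rightarrow> 'a \<Rightarrow> real"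
  assumes "prob_space M"
    and "N \<ge> 1" and "R \<ge> 1"
    and meas: "\<And>n i r. n < N \<Longrightarrow> i < I n \<Longrightarrow> r < R \<Longrightarrow> A n i r \<in> borel_measurable M"
    and sq: "\<And>n i r. n < N \<Longrightarrow> i < I n \<Longrightarrow> r < R \<Longrightarrow> integrable M (\<lambda>w. (A n i r w)\<^sup>2)"
    and indep_mats: "prob_space.indep_vars M
        (\<lambda>n. PiM ({..<I n} \<times> {..<R}) (\<lambda>_. borel))
        (\<lambda>n w. \<lambda>p\<in>{..<I n} \<times> {..<R}. A n (fst p) (snd p) w) {..<N}"
    and indep_rows: "\<And>n. n < N \<Longrightarrow> prob_space.indep_vars M
        (\<lambda>i. PiM {..<R} (\<lambda>_. borel))
        (\<lambda>i w. \<lambda>r\<in>{..<R}. A n i r w) {..<I n}"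
  shows "\<forall>j<R. \<forall>k<R.
      integral\<^sup>L M (\<lambda>w. gram (index_tuples N I) (\<lambda>t r. khatri_rao N (\<lambda>n i r. A n i r w) t r) j k)
        = (\<Sum>t\<in>index_tuples N I. \<Prod>n<N. integral\<^sup>L M (\<lambda>w. A n (t n) j w * A n (t n) k w))
    \<and> (\<forall>n<N. \<forall>i<I n.
        integral\<^sup>L M (\<lambda>w. A n i j w * A n i k w)
          = integral\<^sup>L M (A n i j) * integral\<^sup>L M (A n i k) + covariance M (A n i j) (A n i k))"
proof (intro allI impI conjI)
  interpret P: prob_space M by fact
  fix j k assume j: "j < R" and k: "k < R"
  have fin: "finite (index_tuples N I)" unfolding index_tuples_def by (intro finite_PiE) auto
  have key: "integral\<^sup>L M (\<lambda>w. \<Prod>n<N. A n (t n) j w * A n (t n) k w)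
      = (\<Prod>n<N. integral\<^sup>L M (\<lambda>w. A n (t n) j w * A n (t n) k w))
    \<and> integrable M (\<lambda>w. \<Prod>n<N. A n (t n) j w * A n (t n) k w)"
    if t: "t \<in> index_tuples N I" for t
  proof -
    have tn: "\<And>n. n < N \<Longrightarrow> t n < I n" using t unfolding index_tuples_def by auto
    let ?g = "\<lambda>n (f :: nat \<times> nat \<Rightarrow> real). f (t n, j) * f (t n, k)"
    have "P.indep_vars (\<lambda>_. borel)
        (\<lambda>n w. ?g n ((\<lambda>n w. \<lambda>p\<in>{..<I n} \<times> {..<R}. A n (fst p) (snd p) w) n w)) {..<N}"
    proof (rule P.indep_vars_compose2[OF indep_mats])
      fix n assume "n \<in> {..<N}"
      then have "(t n, j) \<in> {..<I n} \<times> {..<R}" "(t n, k) \<in> {..<I n} \<times> {..<R}"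
        using tn j k by auto
      then show "?g n \<in> borel_measurable (PiM ({..<I n} \<times> {..<R}) (\<lambda>_. borel))"
        by (intro borel_measurable_times measurable_component_singleton)
    qed
    also have "?this \<longleftrightarrow> P.indep_vars (\<lambda>_. borel) (\<lambda>n w. A n (t n) j w * A n (t n) k w) {..<N}"
      by (intro P.indep_vars_cong) (auto simp: tn j k)
    finally have ind: "P.indep_vars (\<lambda>_. borel) (\<lambda>n w. A n (t n) j w * A n (t n) k w) {..<N}" .
    have intg: "\<And>n. n \<in> {..<N} \<Longrightarrow> integrable M (\<lambda>w. A n (t n) j w * A n (t n) k w)"
      using tn j k by (auto intro!: sq_prod_integrable meas sq)
    show ?thesis
      using P.indep_vars_lebesgue_integral[OF _ ind intg] P.indep_vars_integrable[OF _ ind intg]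
      by auto
  qed
  have "integral\<^sup>L M (\<lambda>w. gram (index_tuples N I) (\<lambda>t r. khatri_rao N (\<lambda>n i r. A n i r w) t r) j k)
      = integral\<^sup>L M (\<lambda>w. \<Sum>t\<in>index_tuples N I. \<Prod>n<N. A n (t n) j w * A n (t n) k w)"
    unfolding gram_def khatri_rao_def by (simp add: prod.distrib)
  also have "\<dots> = (\<Sum>t\<in>index_tuples N I. integral\<^sup>L M (\<lambda>w. \<Prod>n<N. A n (t n) j w * A n (t n) k w))"
    using key by (intro Bochner_Integration.integral_sum) auto
  also have "\<dots> = (\<Sum>t\<in>index_tuples N I. \<Prod>n<N. integral\<^sup>L M (\<lambda>w. A n (t n) j w * A n (t n) k w))"
    using key by (intro sum.cong) auto
  finally show "integral\<^sup>L M (\<lambda>w. gram (index_tuples N I) (\<lambda>t r. khatri_rao N (\<lambda>n i r. A n i r w) t r) j k)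
      = (\<Sum>t\<in>index_tuples N I. \<Prod>n<N. integral\<^sup>L M (\<lambda>w. A n (t n) j w * A n (t n) k w))" .
next
  interpret P: prob_space M by fact
  fix j k n i assume j: "j < R" and k: "k < R" and n: "n < N" and i: "i < I n"
  let ?X = "A n i j" and ?Y = "A n i k"
  have iX: "integrable M ?X" by (rule sq_integrable[OF assms(1) meas[OF n i j] sq[OF n i j]])
  have iY: "integrable M ?Y" by (rule sq_integrable[OF assms(1) meas[OF n i k] sq[OF n i k]])
  have iXY: "integrable M (\<lambda>w. ?X w * ?Y w)" by (rule sq_prod_integrable[OF meas[OF n i j] meas[OF n i k] sq[OF n i j] sq[OF n i k]])
  show "integral\<^sup>L M (\<lambda>w. ?X w * ?Y w) = integral\<^sup>L M ?X * integral\<^sup>L M ?Y + covariance M ?X ?Y"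
    by (rule cov[OF assms(1) iX iY iXY])
qed

end
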